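(* Let $d\ge 2$, let $\hat{P}\in\mathbb{R}^{d\times d}$ be an orthogonal projection matrix of rank $p$ with $1\le p\le d-1$, let $\hat{P}^{\perp}=I-\hat{P}$ and $q=d-p$. Let $\lambda_1,\lambda_2>0$, let $k\ge 1$, let $x_{a_0},\dots,x_{a_{k-1}}\in\mathbb{R}^d$ be vectors with $\|x_{a_i}\|\le 1$, let $D_k\in\mathbb{R}^{k\times d}$ be the matrix whose rows are $x_{a_0}^\top,\dots,x_{a_{k-1}}^\top$, and let $B_k=D_k^\top D_k+\lambda_1\hat{P}^{\perp}+\lambda_2\hat{P}$. Then $$\log\left(\frac{\det(B_k)}{\det(\lambda_1\hat{P}^{\perp}+\lambda_2\hat{P})}\right)\le S_k^{\lambda_1,\lambda_2}:=p\log\left(1+\frac{k}{p\lambda_2}\right)+q\log\left(1+\frac{k}{q\lambda_1}\right).$$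
   Context: $\|\cdot\|$ denotes the Euclidean norm. An orthogonal projection matrix is a symmetric idempotent matrix. *)

theory Defs
  imports "HOL-Analysis.Analysis"
begin

end

theory Submission
  imports Defs
begin

lemma detF:
  fixes c :: "real^'n" and a :: 'n
  assumes ca: "c $ a = 0"
  shows "det (\<chi> i j. (if i = j then 1 else 0) - (if i = a then c$j else 0) :: real^'n^'n) = 1"
proof -
  have eq: "(\<chi> i j. (if i = j then 1 else 0) - (if i = a then c$j else 0) :: real^'n^'n)
     = (\<chi> k. if k = a then row a (mat 1) + (-c) else row k (mat 1))"
    by (simp add: vec_eq_iff row_def mat_def)
  have sp: "-c \<in> vec.span {row j (mat 1 :: real^'n^'n) |j. j \<noteq> a}"
  proof -
    have "-c = (\<Sum>j\<in>UNIV - {a}. (- c$j) *s row j (mat 1 :: real^'n^'n))"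
      using ca by (simp add: vec_eq_iff row_def mat_def sum_component if_distrib cong: if_cong)
    also have "\<dots> \<in> vec.span {row j (mat 1 :: real^'n^'n) |j. j \<noteq> a}"
      by (intro vec.span_sum vec.span_scale vec.span_base) auto
    finally show ?thesis .
  qed
  show ?thesis unfolding eq using det_row_span[OF sp] by simp
qed
definition posdef :: "real^'n^'n \<Rightarrow> bool" where
  "posdef X \<longleftrightarrow> (\<forall>x. x \<noteq> 0 \<longrightarrow> 0 < x \<bullet> (X *v x))"

lemma posdef_diag: "posdef X \<Longrightarrow> 0 < X $ i $ i"
  unfolding posdef_def
  by (metis axis_eq_0_iff cart_eq_inner_axis inner_commute matrix_vector_mult_basis column_def vec_lambda_beta zero_neq_one)

lemma sum_delta2:
  fixes f :: "'n::finite \<Rightarrow> real"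
  shows "(\<Sum>l\<in>UNIV. ((if l = i then 1 else 0) - (if l = a then t else 0)) * f l) = f i - t * f a"
  and "(\<Sum>l\<in>UNIV. f l * ((if l = i then 1 else 0) - (if l = a then t else 0))) = f i - t * f a"
proof -
  have "(\<Sum>l\<in>UNIV. ((if l = i then 1 else 0) - (if l = a then t else 0)) * f l)
     = (\<Sum>l\<in>UNIV. (if l = i then f l else 0) - (if l = a then t * f l else 0))"
    by (rule sum.cong) (auto simp: algebra_simps)
  also have "\<dots> = f i - t * f a" by (simp add: sum_subtractf)
  finally show "(\<Sum>l\<in>UNIV. ((if l = i then 1 else 0) - (if l = a then t else 0)) * f l) = f i - t * f a" .
  then show "(\<Sum>l\<in>UNIV. f l * ((if l = i then 1 else 0) - (if l = a then t else 0))) = f i - t * f a"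
    by (simp add: mult.commute)
qed

lemma congr_entries:
  fixes X :: "real^'n^'n" and c :: "real^'n" and a :: 'n
  defines "F \<equiv> (\<chi> i j. (if i = j then 1 else 0) - (if i = a then c$j else 0) :: real^'n^'n)"
  shows "(transpose F ** X ** F) $ i $ j = X$i$j - c$i * X$a$j - c$j * X$i$a + c$i * c$j * X$a$a"
proof -
  have Fe: "F$l$j = (if l = j then 1 else 0) - (if l = a then c$j else 0)" for l j
    unfolding F_def by simp
  have 1: "(transpose F ** X) $ i $ k = X$i$k - c$i * X$a$k" for i k
  proof -
    have "(transpose F ** X) $ i $ k = (\<Sum>l\<in>UNIV. ((if l = i then 1 else 0) - (if l = a then c$i else 0)) * X$l$k)"
      by (simp only: matrix_matrix_mult_def vec_lambda_beta transpose_def Fe)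
    then show ?thesis using sum_delta2(1)[of i a "c$i" "\<lambda>l. X$l$k"] by simp
  qed
  have "(transpose F ** X ** F) $ i $ j = (\<Sum>l\<in>UNIV. (transpose F ** X) $ i $ l * ((if l = j then 1 else 0) - (if l = a then c$j else 0)))"
    by (simp only: matrix_matrix_mult_def[of "transpose F ** X"] vec_lambda_beta Fe)
  also have "\<dots> = (transpose F ** X) $ i $ j - c$j * (transpose F ** X) $ i $ a"
    by (rule sum_delta2(2))
  finally show ?thesis by (simp add: 1 algebra_simps)
qed

lemma quad_congr:
  fixes X :: "real^'m^'m" and F :: "real^'n^'m"
  shows "x \<bullet> ((transpose F ** X ** F) *v x) = (F *v x) \<bullet> (X *v (F *v x))"
proof -
  have "(transpose F ** X ** F) *v x = transpose F *v (X *v (F *v x))"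
    by (simp add: matrix_vector_mul_assoc matrix_mul_assoc)
  also have "\<dots> = (X *v (F *v x)) v* F" by simp
  finally show ?thesis
    by (metis dot_lmul_matrix inner_commute)
qed

lemma det_nz_ker:
  fixes F :: "real^'n^'n"
  assumes "det F \<noteq> 0" "F *v x = 0" shows "x = 0"
  by (metis assms invertible_det_nz invertible_def matrix_left_invertible_ker)

lemma hadamard_aux:
  fixes S :: "'n::finite set"
  shows "\<And>X::real^'n^'n. transpose X = X \<Longrightarrow> posdef X \<Longrightarrow> (\<And>i j. i \<noteq> j \<Longrightarrow> X$i$j \<noteq> 0 \<Longrightarrow> i \<in> S)
     \<Longrightarrow> 0 < det X \<and> det X \<le> (\<Prod>i\<in>UNIV. X$i$i)"
proof -
  have "finite S" by simp
  then show "\<And>X::real^'n^'n. transpose X = X \<Longrightarrow> posdef X \<Longrightarrow> (\<And>i j. i \<noteq> j \<Longrightarrow> X$i$j \<noteq> 0 \<Longrightarrow> i \<in> S)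
     \<Longrightarrow> 0 < det X \<and> det X \<le> (\<Prod>i\<in>UNIV. X$i$i)"
  proof (induction S rule: finite_induct)
    case empty
    then have "det X = (\<Prod>i\<in>UNIV. X$i$i)"
      by (intro det_diagonal) auto
    then show ?case using posdef_diag[OF empty(2)] by (simp add: prod_pos)
  next
    case (insert a S X)
    have symX: "X$i$j = X$j$i" for i j
      using insert.prems(1) by (metis transpose_def vec_lambda_beta)
    have Xaa: "0 < X$a$a" using posdef_diag[OF insert.prems(2)] .
    define c where "c = (\<chi> i. if i = a then 0 else X$i$a / X$a$a)"
    define F where "F = (\<chi> i j. (if i = j then 1 else 0) - (if i = a then c$j else 0) :: real^'n^'n)"
    define Z where "Z = transpose F ** X ** F"
    have ca: "c $ a = 0" unfolding c_def by simp
    have Ze: "Z$i$j = X$i$j - c$i * X$a$j - c$j * X$i$a + c$i * c$j * X$a$a" for i j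
      unfolding Z_def F_def by (rule congr_entries)
    have detF: "det F = 1" unfolding F_def using detF[OF ca] .
    have detZ: "det Z = det X" unfolding Z_def by (simp add: det_mul detF)
    have symZ: "transpose Z = Z"
      by (simp add: vec_eq_iff transpose_def Ze symX algebra_simps)
    have pdZ: "posdef Z"
      unfolding posdef_def
    proof (intro allI impI)
      fix x :: "real^'n" assume "x \<noteq> 0"
      then have "F *v x \<noteq> 0" using det_nz_ker[of F x] detF by auto
      then show "0 < x \<bullet> (Z *v x)"
        using insert.prems(2) unfolding Z_def quad_congr posdef_def by blast
    qed
    have Zoff: "Z$i$j = X$i$j - X$i$a * X$j$a / X$a$a" if ia: "i \<noteq> a" and ja: "j \<noteq> a" for i j
    proof -
      have "Z$i$j = X$i$j - (X$i$a/X$a$a) * X$a$j - (X$j$a/X$a$a)*X$i$a + (X$i$a/X$a$a)*(X$j$a/X$a$a)*X$a$a"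
        using Ze[of i j] ia ja by (simp add: c_def)
      also have "\<dots> = X$i$j - X$i$a * X$j$a / X$a$a"
        using Xaa symX[of a j] by (simp add: field_simps power2_eq_square)
      finally show ?thesis .
    qed
    have suppZ: "i \<in> S" if "i \<noteq> j" "Z$i$j \<noteq> 0" for i j
    proof -
      have ia: "i \<noteq> a"
      proof
        assume "i = a"
        then have "Z$i$j = X$a$j - c$j * X$a$a" using Ze ca by simp
        also have "\<dots> = 0" using \<open>i = a\<close> that(1) Xaa symX[of a j] by (simp add: c_def)
        finally show False using that(2) by simp
      qed
      have ja: "j \<noteq> a"
      proof
        assume "j = a"
        then have "Z$i$j = X$i$a - c$i * X$a$a" using Ze ca by simp
        also have "\<dots> = 0" using ia Xaa by (simp add: c_def)
        finally show False using that(2) by simp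
      qed
      have "Z$i$j = X$i$j - X$i$a * X$j$a / X$a$a" using Zoff ia ja by simp
      then have "X$i$j \<noteq> 0 \<or> X$i$a \<noteq> 0" using that(2) by auto
      then have "i \<in> insert a S" using insert.prems(3) that(1) ia by blast
      then show ?thesis using ia by simp
    qed
    have diag: "Z$i$i \<le> X$i$i" for i
    proof (cases "i = a")
      case True then show ?thesis using Ze[of i i] ca by simp
    next
      case False
      then have "Z$i$i = X$i$i - (X$i$a * X$i$a) / X$a$a"
        using Zoff by simp
      then show ?thesis using Xaa by (simp add: divide_nonneg_pos)
    qed
    have IH: "0 < det Z \<and> det Z \<le> (\<Prod>i\<in>UNIV. Z$i$i)" by (rule insert.IH[OF symZ pdZ]) (rule suppZ)
    have "det X = det Z" using detZ by simp
    also have "\<dots> \<le> (\<Prod>i\<in>UNIV. Z$i$i)" using IH by blast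
    also have "\<dots> \<le> (\<Prod>i\<in>UNIV. X$i$i)"
      by (intro prod_mono conjI diag less_imp_le[OF posdef_diag[OF pdZ]])
    finally show ?case using IH detZ by simp
  qed
qed

lemma hadamard:
  fixes X :: "real^'n^'n"
  assumes "transpose X = X" "posdef X"
  shows "0 < det X \<and> det X \<le> (\<Prod>i\<in>UNIV. X$i$i)"
  using hadamard_aux[of X UNIV] assms by blast

lemma congr_col:
  fixes U M :: "real^'n^'n"
  shows "(transpose U ** M ** U) $ i $ j = column i U \<bullet> (M *v column j U)"
proof -
  have "(transpose U ** M ** U) $ i $ j = (transpose U ** (M ** U)) $ i $ j" by (simp add: matrix_mul_assoc)
  also have "\<dots> = (\<Sum>k\<in>UNIV. U$k$i * (\<Sum>l\<in>UNIV. M$k$l * U$l$j))"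
    by (simp add: matrix_matrix_mult_def transpose_def)
  also have "\<dots> = column i U \<bullet> (M *v column j U)"
    by (simp add: inner_vec_def matrix_vector_mult_def column_def)
  finally show ?thesis .
qed

lemma smv: "((a::real) *\<^sub>R (M::real^'n^'m)) *v x = a *\<^sub>R (M *v x)"
  by (simp add: vec_eq_iff matrix_vector_mult_def sum_distrib_left mult.assoc)

lemma proj_basis:
  fixes P :: "real^'d^'d"
  assumes sym: "transpose P = P" and idem: "P ** P = P"
  obtains U :: "real^'d^'d" and I :: "'d set"
  where "transpose U ** U = mat 1"
    and "\<And>a b. transpose U ** (a *\<^sub>R (mat 1 - P) + b *\<^sub>R P) ** U = (\<chi> i j. if i = j then (if i \<in> I then b else a) else 0)"
    and "card I = rank P"
proof -
  define S1 where "S1 = range (\<lambda>x. P *v x)"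
  define S2 where "S2 = range (\<lambda>x. (mat 1 - P) *v x)"
  have sub1: "subspace S1" unfolding S1_def
    by (intro linear_subspace_image subspace_UNIV matrix_vector_mul_linear)
  have sub2: "subspace S2" unfolding S2_def
    by (intro linear_subspace_image subspace_UNIV matrix_vector_mul_linear)
  obtain B1 where B1: "B1 \<subseteq> S1" "pairwise orthogonal B1" "\<And>x. x \<in> B1 \<Longrightarrow> norm x = 1"
     "independent B1" "card B1 = dim S1" "span B1 = S1"
    using orthonormal_basis_subspace[OF sub1] by blast
  obtain B2 where B2: "B2 \<subseteq> S2" "pairwise orthogonal B2" "\<And>x. x \<in> B2 \<Longrightarrow> norm x = 1"
     "independent B2" "card B2 = dim S2" "span B2 = S2"
    using orthonormal_basis_subspace[OF sub2] by blast
  have Pv: "P *v y = y v* P" for y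
    by (metis sym transpose_matrix_vector)
  have PP: "P *v (P *v y) = P *v y" for y
    by (simp add: matrix_vector_mul_assoc idem)
  have orth12: "u \<bullet> w = 0" if uw: "u \<in> S1" "w \<in> S2" for u w
  proof -
    obtain y z where yz: "u = P *v y" "w = (mat 1 - P) *v z" using uw S1_def S2_def by auto
    have "u \<bullet> w = (P *v y) \<bullet> z - (P *v y) \<bullet> (P *v z)"
      by (simp add: yz matrix_vector_mult_diff_rdistrib inner_diff_right)
    also have "(P *v y) \<bullet> z = y \<bullet> (P *v z)" by (simp add: Pv dot_lmul_matrix)
    also have "(P *v y) \<bullet> (P *v z) = y \<bullet> (P *v z)" by (metis Pv dot_lmul_matrix PP)
    finally show ?thesis by simp
  qed
  have P1: "P *v u = u" if "u \<in> S1" for u using that PP S1_def by auto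
  have P2: "P *v w = 0" if "w \<in> S2" for w
    using that PP S2_def by (auto simp: matrix_vector_mult_diff_rdistrib matrix_vector_mult_diff_distrib)
  define B where "B = B1 \<union> B2"
  have n1: "norm x = 1" if "x \<in> B" for x using that B1(3) B2(3) B_def by auto
  have orthB: "pairwise orthogonal B"
    unfolding B_def pairwise_def orthogonal_def
  proof (intro ballI impI)
    fix x y assume xy: "x \<in> B1 \<union> B2" "y \<in> B1 \<union> B2" "x \<noteq> y"
    then show "x \<bullet> y = 0"
      using B1(1,2) B2(1,2) orth12 inner_commute
      unfolding pairwise_def orthogonal_def by (metis Un_iff subsetD)
  qed
  have disj: "B1 \<inter> B2 = {}"
  proof (rule ccontr)
    assume "B1 \<inter> B2 \<noteq> {}"
    then obtain x where "x \<in> B1" "x \<in> B2" by auto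
    then have "x \<bullet> x = 0" using orth12 B1(1) B2(1) by blast
    then show False using B1(3)[OF \<open>x \<in> B1\<close>] by simp
  qed
  have indB: "independent B"
    using pairwise_orthogonal_independent[OF orthB] n1 by force
  have spanB: "UNIV \<subseteq> span B"
  proof
    fix x :: "real^'d"
    have "x = P *v x + (mat 1 - P) *v x" by (simp add: matrix_vector_mult_diff_rdistrib)
    moreover have "P *v x \<in> span B" using B1(6) S1_def span_mono[of B1 B] B_def by auto
    moreover have "(mat 1 - P) *v x \<in> span B" using B2(6) S2_def span_mono[of B2 B] B_def by auto
    ultimately show "x \<in> span B" by (metis span_add)
  qed
  have cardB: "card B = CARD('d)"
    using basis_card_eq_dim[OF subset_UNIV spanB indB] by simp
  have finB: "finite B" using indB independent_imp_finite by blast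
  obtain f where f: "bij_betw f (UNIV::'d set) B"
    using finite_same_card_bij[OF finite finB] cardB by auto
  define I where "I = {i. f i \<in> B1}"
  define U where "U = (\<chi> i j. f j $ i :: real^'d^'d)"
  have colU: "column j U = f j" for j by (simp add: U_def column_def vec_eq_iff)
  have fB: "f j \<in> B" for j using f bij_betwE by blast
  have finj: "f i = f j \<Longrightarrow> i = j" for i j using f by (simp add: bij_betw_def inj_def)
  have dot: "f i \<bullet> f j = (if i = j then 1 else 0)" for i j
  proof (cases "i = j")
    case True then show ?thesis using n1[OF fB[of j]] by (simp add: dot_square_norm)
  next
    case False then show ?thesis using orthB fB[of i] fB[of j] finj
      unfolding pairwise_def orthogonal_def by auto
  qed
  have "transpose U ** U = mat 1"
  proof -
    have "(transpose U ** U) $ i $ j = (transpose U ** mat 1 ** U) $ i $ j" for i j by simp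
    then show ?thesis unfolding vec_eq_iff congr_col colU matrix_vector_mul_lid by (simp add: dot mat_def)
  qed
  moreover have "transpose U ** (a *\<^sub>R (mat 1 - P) + b *\<^sub>R P) ** U = (\<chi> i j. if i = j then (if i \<in> I then b else a) else 0)" for a b
  proof -
    have ev: "(a *\<^sub>R (mat 1 - P) + b *\<^sub>R P) *v f j = (if j \<in> I then b else a) *\<^sub>R f j" for j
    proof (cases "j \<in> I")
      case True
      then have "P *v f j = f j" using P1 B1(1) I_def by auto
      then show ?thesis using True
        by (simp add: matrix_vector_mult_add_rdistrib matrix_vector_mult_diff_rdistrib smv algebra_simps)
    next
      case False
      then have "f j \<in> B2" using fB[of j] I_def B_def by auto
      then have "P *v f j = 0" using P2 B2(1) by auto
      then show ?thesis using False
        by (simp add: matrix_vector_mult_add_rdistrib matrix_vector_mult_diff_rdistrib smv algebra_simps)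
    qed
    show ?thesis by (simp add: vec_eq_iff congr_col colU ev dot)
  qed
  moreover have "card I = rank P"
  proof -
    have "bij_betw f I B1" using f unfolding I_def B_def bij_betw_def inj_on_def by auto
    then have "card I = card B1" by (rule bij_betw_same_card)
    also have "\<dots> = rank P" using B1(5) rank_dim_range[of P] S1_def by simp
    finally show ?thesis .
  qed
  ultimately show ?thesis using that by blast
qed

lemma matrix_add_rdistrib': "((A::real^'n^'m) + B) ** C = A ** C + B ** C"
  by (vector matrix_matrix_mult_def sum.distrib[symmetric] field_simps)

lemma jensen_ln:
  fixes A :: "'a set" and g :: "'a \<Rightarrow> real"
  assumes fin: "finite A" and m: "card A = m" "m > 0" and g: "\<And>i. i \<in> A \<Longrightarrow> 0 \<le> g i" and c: "c > 0"
  shows "(\<Sum>i\<in>A. ln (1 + g i / c)) \<le> real m * ln (1 + (\<Sum>i\<in>A. g i) / (real m * c))"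
proof -
  define M where "M = 1 + (\<Sum>i\<in>A. g i) / (real m * c)"
  have s0: "0 \<le> (\<Sum>i\<in>A. g i)" using g by (simp add: sum_nonneg)
  have Mpos: "M > 0" unfolding M_def using s0 c m by (simp add: add_pos_nonneg)
  have pos: "0 < 1 + g i / c" if "i \<in> A" for i using g[OF that] c by (simp add: add_pos_nonneg)
  have "(\<Sum>i\<in>A. ln (1 + g i / c)) - real m * ln M = (\<Sum>i\<in>A. ln ((1 + g i / c) / M))"
  proof -
    have "(\<Sum>i\<in>A. ln ((1 + g i / c) / M)) = (\<Sum>i\<in>A. ln (1 + g i / c) - ln M)"
      by (intro sum.cong refl ln_divide_pos pos Mpos)
    then show ?thesis using m by (simp add: sum_subtractf)
  qed
  also have "\<dots> \<le> (\<Sum>i\<in>A. (1 + g i / c) / M - 1)"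
    by (intro sum_mono ln_le_minus_one divide_pos_pos pos Mpos)
  also have "\<dots> = ((real m + (\<Sum>i\<in>A. g i) / c) / M) - real m"
    using m by (simp add: sum_subtractf sum_divide_distrib[symmetric] sum.distrib add_divide_distrib)
  also have "\<dots> = 0"
  proof -
    have Mm: "real m + (\<Sum>i\<in>A. g i) / c = M * real m" unfolding M_def using m c by (simp add: field_simps)
    show ?thesis unfolding Mm using Mpos by simp
  qed
  finally show ?thesis unfolding M_def by simp
qed

lemma ln_mono_aux:
  fixes s K c :: real and m :: nat
  assumes "0 \<le> s" "s \<le> K" "0 < c" "0 < m"
  shows "real m * ln (1 + s / (real m * c)) \<le> real m * ln (1 + K / (real m * c))"
proof -
  have mc: "0 < real m * c" using assms by simp
  have "s / (real m * c) \<le> K / (real m * c)" using assms(2) mc by (simp add: divide_right_mono)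
  moreover have "0 < 1 + s / (real m * c)" using assms(1) mc by (simp add: add_pos_nonneg)
  ultimately have "ln (1 + s / (real m * c)) \<le> ln (1 + K / (real m * c))" by simp
  then show ?thesis by (simp add: mult_left_mono)
qed

theorem lemma2:
  fixes P :: "real^'d^'d" and D :: "real^'d^'k"
    and p :: nat and lambda1 lambda2 :: real
  assumes "CARD('d) \<ge> 2"
    and "transpose P = P" and "P ** P = P"
    and "rank P = p" and "1 \<le> p" and "p \<le> CARD('d) - 1"
    and "lambda1 > 0" and "lambda2 > 0"
    and "\<And>i. norm (D $ i) \<le> 1"
  shows "ln (det (transpose D ** D + lambda1 *\<^sub>R (mat 1 - P) + lambda2 *\<^sub>R P)
              / det (lambda1 *\<^sub>R (mat 1 - P) + lambda2 *\<^sub>R P))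
         \<le> real p * ln (1 + real CARD('k) / (real p * lambda2))
           + real (CARD('d) - p) * ln (1 + real CARD('k) / (real (CARD('d) - p) * lambda1))"
proof -
  obtain U :: "real^'d^'d" and I :: "'d set" where UU: "transpose U ** U = mat 1"
    and diagV: "\<And>a b. transpose U ** (a *\<^sub>R (mat 1 - P) + b *\<^sub>R P) ** U = (\<chi> i j. if i = j then (if i \<in> I then b else a) else 0)"
    and cardI: "card I = rank P"
    using proj_basis[OF assms(2,3)] by blast
  define V where "V = lambda1 *\<^sub>R (mat 1 - P) + lambda2 *\<^sub>R P"
  define v where "v = (\<lambda>i. if i \<in> I then lambda2 else lambda1)"
  define Dl where "Dl = ((\<chi> i j. if i = j then v i else 0) :: real^'d^'d)"
  define Y where "Y = D ** U"
  have UV: "transpose U ** V ** U = Dl" using diagV unfolding V_def Dl_def v_def by simp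
  have vpos: "0 < v i" for i using assms(7,8) by (simp add: v_def)
  have detU: "det (transpose U) * det U = 1" using UU det_mul[of "transpose U" U] by simp
  have detc: "det (transpose U ** M ** U) = det M" for M :: "real^'d^'d"
    using detU by (simp add: det_mul)
  have Bsplit: "transpose U ** (transpose D ** D + lambda1 *\<^sub>R (mat 1 - P) + lambda2 *\<^sub>R P) ** U = transpose Y ** Y + Dl"
  proof -
    have "transpose D ** D + lambda1 *\<^sub>R (mat 1 - P) + lambda2 *\<^sub>R P = transpose D ** D + V"
      unfolding V_def by (simp add: add.assoc)
    then have "transpose U ** (transpose D ** D + lambda1 *\<^sub>R (mat 1 - P) + lambda2 *\<^sub>R P) ** U
       = transpose U ** (transpose D ** D + V) ** U" by (rule arg_cong[where f="\<lambda>M. transpose U ** M ** U"])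
    also have "\<dots> = transpose U ** (transpose D ** D) ** U + transpose U ** V ** U"
      by (simp only: matrix_add_ldistrib matrix_add_rdistrib')
    also have "transpose U ** (transpose D ** D) ** U = transpose Y ** Y"
      unfolding Y_def by (simp add: matrix_transpose_mul matrix_mul_assoc)
    finally show ?thesis using UV by simp
  qed
  define B' where "B' = transpose Y ** Y + Dl"
  have B'e: "B'$i$j = column i Y \<bullet> column j Y + (if i = j then v i else 0)" for i j
    by (simp add: B'_def Dl_def matrix_mult_transpose_dot_column)
  have symB': "transpose B' = B'"
    by (simp add: vec_eq_iff transpose_def B'e inner_commute)
  have Dlv: "Dl *v x = (\<chi> i. v i * x$i)" for x
  proof -
    have "(Dl *v x) $ i = v i * x$i" for i
    proof -
      have "(Dl *v x) $ i = (\<Sum>j\<in>UNIV. (if i = j then v i else 0) * x$j)"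
        unfolding matrix_vector_mult_def Dl_def by simp
      also have "\<dots> = (\<Sum>j\<in>UNIV. if j = i then v i * x$j else 0)"
        by (rule sum.cong) auto
      finally have "(Dl *v x) $ i = (\<Sum>j\<in>UNIV. if j = i then v i * x$j else 0)" .
      then show ?thesis by simp
    qed
    then show ?thesis by (simp add: vec_eq_iff)
  qed
  have pdB': "posdef B'"
    unfolding posdef_def
  proof (intro allI impI)
    fix x :: "real^'d" assume "x \<noteq> 0"
    then obtain i where xi: "x$i \<noteq> 0" by (auto simp: vec_eq_iff)
    have "x \<bullet> (B' *v x) = x \<bullet> ((transpose Y ** mat 1 ** Y) *v x) + x \<bullet> (Dl *v x)"
      by (simp add: B'_def matrix_vector_mult_add_rdistrib inner_add_right)
    also have "x \<bullet> ((transpose Y ** mat 1 ** Y) *v x) = (Y *v x) \<bullet> (Y *v x)"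
      by (simp only: quad_congr matrix_vector_mul_lid)
    also have "x \<bullet> (Dl *v x) = (\<Sum>j\<in>UNIV. v j * (x$j)^2)"
      by (simp add: Dlv inner_vec_def power2_eq_square mult_ac)
    finally have eq: "x \<bullet> (B' *v x) = (Y *v x) \<bullet> (Y *v x) + (\<Sum>j\<in>UNIV. v j * (x$j)^2)" .
    have nn: "0 \<le> v j * (x$j)^2" for j using vpos[of j] by simp
    have "0 < v i * (x$i)^2" using vpos[of i] xi by simp
    then have "0 < (\<Sum>j\<in>UNIV. v j * (x$j)^2)"
      using sum_pos2[of UNIV i "\<lambda>j. v j * (x$j)^2"] nn by simp
    then show "0 < x \<bullet> (B' *v x)" unfolding eq by (simp add: add_nonneg_pos)
  qed
  have hd: "0 < det B' \<and> det B' \<le> (\<Prod>i\<in>UNIV. B'$i$i)" by (rule hadamard[OF symB' pdB'])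
  define g where "g i = column i Y \<bullet> column i Y" for i
  have g0: "0 \<le> g i" for i unfolding g_def by simp
  have B'diag: "B'$i$i = v i + g i" for i by (simp add: B'e g_def)
  have detB: "det (transpose D ** D + lambda1 *\<^sub>R (mat 1 - P) + lambda2 *\<^sub>R P) = det B'"
    using detc Bsplit B'_def by metis
  have detV: "det (lambda1 *\<^sub>R (mat 1 - P) + lambda2 *\<^sub>R P) = (\<Prod>i\<in>UNIV. v i)"
  proof -
    have "det (lambda1 *\<^sub>R (mat 1 - P) + lambda2 *\<^sub>R P) = det Dl" using detc UV V_def by metis
    also have "\<dots> = (\<Prod>i\<in>UNIV. v i)" by (subst det_diagonal) (auto simp: Dl_def)
    finally show ?thesis .
  qed
  have sumg: "(\<Sum>i\<in>UNIV. g i) \<le> real CARD('k)"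
  proof -
    have UUt: "U ** transpose U = mat 1" using UU matrix_left_right_inverse by blast
    have rowY: "(Y $ k) \<bullet> (Y $ k) = (D $ k) \<bullet> (D $ k)" for k
    proof -
      have "Y $ k = D $ k v* U"
        by (simp add: Y_def vec_eq_iff matrix_matrix_mult_def vector_matrix_mult_def mult.commute)
      then have "(Y $ k) \<bullet> (Y $ k) = D $ k \<bullet> (U *v (transpose U *v D $ k))"
        by (simp add: dot_lmul_matrix)
      also have "\<dots> = D $ k \<bullet> D $ k"
        by (simp only: matrix_vector_mul_assoc UUt matrix_vector_mul_lid)
      finally show ?thesis .
    qed
    have "(\<Sum>i\<in>UNIV. g i) = (\<Sum>i\<in>UNIV. \<Sum>k\<in>UNIV. Y$k$i * Y$k$i)"
      by (simp add: g_def inner_vec_def column_def)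
    also have "\<dots> = (\<Sum>k\<in>UNIV. (Y $ k) \<bullet> (Y $ k))"
      by (subst sum.swap) (simp add: inner_vec_def)
    also have "\<dots> = (\<Sum>k\<in>UNIV. (D $ k) \<bullet> (D $ k))" by (simp add: rowY)
    also have "\<dots> \<le> (\<Sum>k\<in>(UNIV::'k set). 1)"
    proof (rule sum_mono)
      fix k :: 'k
      have "(D $ k) \<bullet> (D $ k) = (norm (D $ k))^2" by (simp add: power2_norm_eq_inner)
      also have "\<dots> \<le> 1" using assms(9)[of k] by (simp add: power_le_one)
      finally show "(D $ k) \<bullet> (D $ k) \<le> 1" .
    qed
    finally show ?thesis by simp
  qed
  define h where "h i = ln (1 + g i / v i)" for i
  have lnprod: "ln (det B') \<le> (\<Sum>i\<in>UNIV. ln (v i + g i))"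
  proof -
    have "ln (det B') \<le> ln (\<Prod>i\<in>UNIV. B'$i$i)" using hd by simp
    also have "\<dots> = (\<Sum>i\<in>UNIV. ln (v i + g i))"
    proof -
      have ne: "v i + g i \<noteq> 0" for i using vpos[of i] g0[of i] by linarith
      show ?thesis unfolding B'diag by (rule ln_prod) (use ne in auto)
    qed
    finally show ?thesis .
  qed
  have lnV: "ln (\<Prod>i\<in>UNIV. v i) = (\<Sum>i\<in>UNIV. ln (v i))"
    by (rule ln_prod) (use vpos in \<open>auto simp: less_imp_neq[symmetric]\<close>)
  have "ln (det (transpose D ** D + lambda1 *\<^sub>R (mat 1 - P) + lambda2 *\<^sub>R P)
              / det (lambda1 *\<^sub>R (mat 1 - P) + lambda2 *\<^sub>R P))
        = ln (det B') - ln (\<Prod>i\<in>UNIV. v i)"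
    unfolding detB detV using hd vpos by (simp add: ln_divide_pos prod_pos)
  also have "\<dots> \<le> (\<Sum>i\<in>UNIV. h i)"
  proof -
    have "(\<Sum>i\<in>UNIV. ln (v i + g i)) - (\<Sum>i\<in>UNIV. ln (v i)) = (\<Sum>i\<in>UNIV. h i)"
    proof -
      have "ln (v i + g i) - ln (v i) = h i" for i
      proof -
        have "v i + g i = v i * (1 + g i / v i)" using vpos[of i] by (simp add: field_simps)
        moreover have pos: "0 < 1 + g i / v i" using vpos[of i] g0[of i] by (simp add: add_pos_nonneg)
        ultimately have "ln (v i + g i) = ln (v i) + ln (1 + g i / v i)"
          using ln_mult[of "v i" "1 + g i / v i"] vpos[of i] pos by simp
        then show ?thesis unfolding h_def by simp
      qed
      then show ?thesis by (simp add: sum_subtractf[symmetric])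
    qed
    then show ?thesis using lnprod lnV by linarith
  qed
  also have "(\<Sum>i\<in>UNIV. h i) = (\<Sum>i\<in>I. h i) + (\<Sum>i\<in>UNIV - I. h i)"
    by (simp add: sum.subset_diff[of I UNIV])
  also have "(\<Sum>i\<in>I. h i) \<le> real p * ln (1 + real CARD('k) / (real p * lambda2))"
  proof -
    have "(\<Sum>i\<in>I. h i) = (\<Sum>i\<in>I. ln (1 + g i / lambda2))" by (simp add: h_def v_def)
    also have "\<dots> \<le> real p * ln (1 + (\<Sum>i\<in>I. g i) / (real p * lambda2))"
      using jensen_ln[of I p g lambda2] cardI assms(4,5,8) g0 by simp
    also have "\<dots> \<le> real p * ln (1 + real CARD('k) / (real p * lambda2))"
    proof -
      have "(\<Sum>i\<in>I. g i) \<le> (\<Sum>i\<in>UNIV. g i)" by (rule sum_mono2) (auto simp: g0)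
      then have "(\<Sum>i\<in>I. g i) \<le> real CARD('k)" using sumg by linarith
      moreover have "0 \<le> (\<Sum>i\<in>I. g i)" by (simp add: sum_nonneg g0)
      ultimately show ?thesis using assms(5,8) ln_mono_aux by simp
    qed
    finally show ?thesis .
  qed
  also have "(\<Sum>i\<in>UNIV - I. h i) \<le> real (CARD('d) - p) * ln (1 + real CARD('k) / (real (CARD('d) - p) * lambda1))"
  proof -
    have cq: "card (UNIV - I) = CARD('d) - p" using cardI assms(4) by (simp add: card_Diff_subset)
    have qpos: "0 < CARD('d) - p" using assms(5,6,1) by linarith
    have "(\<Sum>i\<in>UNIV - I. h i) = (\<Sum>i\<in>UNIV - I. ln (1 + g i / lambda1))" by (simp add: h_def v_def)
    also have "\<dots> \<le> real (CARD('d) - p) * ln (1 + (\<Sum>i\<in>UNIV - I. g i) / (real (CARD('d) - p) * lambda1))"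
      using jensen_ln[of "UNIV - I" "CARD('d) - p" g lambda1] cq qpos assms(7) g0 by simp
    also have "\<dots> \<le> real (CARD('d) - p) * ln (1 + real CARD('k) / (real (CARD('d) - p) * lambda1))"
    proof -
      have "(\<Sum>i\<in>UNIV - I. g i) \<le> (\<Sum>i\<in>UNIV. g i)" by (rule sum_mono2) (auto simp: g0)
      then have "(\<Sum>i\<in>UNIV - I. g i) \<le> real CARD('k)" using sumg by linarith
      moreover have "0 \<le> (\<Sum>i\<in>UNIV - I. g i)" by (simp add: sum_nonneg g0)
      ultimately show ?thesis using assms(7) qpos ln_mono_aux[of "sum g (UNIV - I)" "real CARD('k)" lambda1 "CARD('d) - p"] by blast
    qed
    finally show ?thesis .
  qed
  finally show ?thesis by simp
qed

end
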